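(* Let $r$ be a normalized formal generalized $r$-matrix. Then $\mathfrak g(r)\cap z^{-1}\mathfrak g[\![z]\!]=\{(1\otimes\alpha)r(z,0)\mid\alpha\in\mathfrak g^*\}$, and this subspace generates $\mathfrak g(r)$ as a Lie algebra.
   Context: $\Bbbk$ is a field of characteristic $0$, $\mathfrak g$ a finite-dimensional semisimple Lie algebra over $\Bbbk$ of dimension $d$ with Killing form $\kappa$, $\{b_i\}$ a $\kappa$-orthonormal basis, $\gamma=\sum_i b_i\otimes b_i$, and $\frac{1}{x-y}=\sum_{k\ge0}x^{-k-1}y^k$. A series $r\in(\mathfrak g\otimes\mathfrak g)(\!(x)\!)[\![y]\!]$ is in normalized standard form if $r=\frac{\gamma}{x-y}+r_0$ with $r_0\in(\mathfrak g\otimes\mathfrak g)[\![x,y]\!]$; then $\bar r(x,y)=\frac{\gamma}{x-y}-\tau(r_0(y,x))$, $\tau$ the flip. With $s^{ij}$ meaning substitution $(x,y)=(x_i,x_j)$ and placement of tensor factors in positions $i,j$ inside $(U(\mathfrak g)^{\otimes 3})\otimes\Bbbk(\!(x_1)\!)(\!(x_2)\!)[\![x_3]\!]$, a normalized formal generalized $r$-matrix is such an $r$ with $[r^{12},r^{13}]+[r^{12},r^{23}]+[r^{13},\bar r^{23}]=0$. For $s=\sum_{k,i}s_{k,i}(x)\otimes b_iy^k$, $\mathfrak g(s)=\mathrm{span}_\Bbbk\{s_{k,i}(z)\}\subseteq\mathfrak g(\!(z)\!)$. Here $r(z,0)\in\mathfrak g(\!(z)\!)\otimes\mathfrak g$ is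 the $y^0$-coefficient and $(1\otimes\alpha)$ applies $\alpha$ to the second factor. *)

theory Defs
  imports Main "HOL.Vector_Spaces" "HOL-Library.Groups_Big_Fun"
begin

definition lie_algebra :: "('k::field \<Rightarrow> 'g::ab_group_add \<Rightarrow> 'g) \<Rightarrow> ('g \<Rightarrow> 'g \<Rightarrow> 'g) \<Rightarrow> bool" where
  "lie_algebra scale br \<longleftrightarrow>
     vector_space scale \<and>
     (\<forall>x. Vector_Spaces.linear scale scale (br x)) \<and>
     (\<forall>y. Vector_Spaces.linear scale scale (\<lambda>x. br x y)) \<and>
     (\<forall>x. br x x = 0) \<and>
     (\<forall>x y z. br x (br y z) + br y (br z x) + br z (br x y) = 0)"

definition lie_ideal :: "('k::field \<Rightarrow> 'g::ab_group_add \<Rightarrow> 'g) \<Rightarrow> ('g \<Rightarrow> 'g \<Rightarrow> 'g) \<Rightarrow> 'g set \<Rightarrow> bool" where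
  "lie_ideal scale br I \<longleftrightarrow> module.subspace scale I \<and> (\<forall>x y. y \<in> I \<longrightarrow> br x y \<in> I)"

fun derived :: "('k::field \<Rightarrow> 'g::ab_group_add \<Rightarrow> 'g) \<Rightarrow> ('g \<Rightarrow> 'g \<Rightarrow> 'g) \<Rightarrow> nat \<Rightarrow> 'g set \<Rightarrow> 'g set" where
  "derived scale br 0 I = I"
| "derived scale br (Suc n) I =
     module.span scale {br a c | a c. a \<in> derived scale br n I \<and> c \<in> derived scale br n I}"

definition solvable_ideal :: "('k::field \<Rightarrow> 'g::ab_group_add \<Rightarrow> 'g) \<Rightarrow> ('g \<Rightarrow> 'g \<Rightarrow> 'g) \<Rightarrow> 'g set \<Rightarrow> bool" where
  "solvable_ideal scale br I \<longleftrightarrow> lie_ideal scale br I \<and> (\<exists>n. derived scale br n I = {0})"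

definition semisimple :: "('k::field \<Rightarrow> 'g::ab_group_add \<Rightarrow> 'g) \<Rightarrow> ('g \<Rightarrow> 'g \<Rightarrow> 'g) \<Rightarrow> bool" where
  "semisimple scale br \<longleftrightarrow> lie_algebra scale br \<and> (\<forall>I. solvable_ideal scale br I \<longrightarrow> I = {0})"

definition lin_trace :: "('k::field \<Rightarrow> 'g::ab_group_add \<Rightarrow> 'g) \<Rightarrow> ('g \<Rightarrow> 'g) \<Rightarrow> 'k" where
  "lin_trace scale f =
     (let B = (SOME B. finite B \<and> \<not> module.dependent scale B \<and> module.span scale B = UNIV)
      in \<Sum>v\<in>B. module.representation scale B (f v) v)"

definition killing :: "('k::field \<Rightarrow> 'g::ab_group_add \<Rightarrow> 'g) \<Rightarrow> ('g \<Rightarrow> 'g \<Rightarrow> 'g) \<Rightarrow> 'g \<Rightarrow> 'g \<Rightarrow> 'k" where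
  "killing scale br x y = lin_trace scale (\<lambda>v. br x (br y v))"

text \<open>A series r in (g\<otimes>g)((x))[[y]] is encoded by its coefficients:
  r = \<Sum>_{n,k} \<Sum>_i (r n k i) \<otimes> b_i x^n y^k   (n :: int, k :: nat),
  i.e. the second tensor factor is expanded in the basis b.\<close>

text \<open>Coefficients of \<gamma>/(x-y) = \<Sum>_k \<Sum>_i b_i \<otimes> b_i x^(-k-1) y^k.\<close>
definition gam :: "('i \<Rightarrow> 'g::zero) \<Rightarrow> int \<Rightarrow> nat \<Rightarrow> 'i \<Rightarrow> 'g" where
  "gam b n k i = (if n = - int k - 1 then b i else 0)"

definition rzero :: "('i \<Rightarrow> 'g::ab_group_add) \<Rightarrow> (int \<Rightarrow> nat \<Rightarrow> 'i \<Rightarrow> 'g) \<Rightarrow> int \<Rightarrow> nat \<Rightarrow> 'i \<Rightarrow> 'g" where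
  "rzero b r n k i = r n k i - gam b n k i"

text \<open>Normalized standard form: r - \<gamma>/(x-y) lies in (g\<otimes>g)[[x,y]].\<close>
definition normalized_standard_form :: "('i \<Rightarrow> 'g::ab_group_add) \<Rightarrow> (int \<Rightarrow> nat \<Rightarrow> 'i \<Rightarrow> 'g) \<Rightarrow> bool" where
  "normalized_standard_form b r \<longleftrightarrow> (\<forall>n k i. n < 0 \<longrightarrow> rzero b r n k i = 0)"

text \<open>rbar(x,y) = \<gamma>/(x-y) - \<tau>(r0(y,x)).  The x^n y^k coefficient of \<tau>(r0(y,x)) is
  \<tau>(r0_{k,n}) = \<Sum>_i b_i \<otimes> r0_{k,n,i} = \<Sum>_j (\<Sum>_i \<kappa>(r0_{k,n,i}, b_j) b_i) \<otimes> b_j.\<close>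
definition rbar :: "('k::field \<Rightarrow> 'g::ab_group_add \<Rightarrow> 'g) \<Rightarrow> ('g \<Rightarrow> 'g \<Rightarrow> 'g) \<Rightarrow> ('i::finite \<Rightarrow> 'g)
     \<Rightarrow> (int \<Rightarrow> nat \<Rightarrow> 'i \<Rightarrow> 'g) \<Rightarrow> int \<Rightarrow> nat \<Rightarrow> 'i \<Rightarrow> 'g" where
  "rbar scale br b r n k j =
     gam b n k j -
     (if 0 \<le> n then (\<Sum>i\<in>UNIV. scale (killing scale br (rzero b r (int k) (nat n) i) (b j)) (b i)) else 0)"

definition rI :: "(int \<Rightarrow> nat \<Rightarrow> 'i \<Rightarrow> 'g::zero) \<Rightarrow> int \<Rightarrow> int \<Rightarrow> 'i \<Rightarrow> 'g" where
  "rI r n m i = (if m < 0 then 0 else r n (nat m) i)"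

text \<open>The three terms of the generalized CYBE.  All three commutators lie in
  (g\<otimes>g\<otimes>g) \<otimes> k((x1))((x2))[[x3]] inside U(g)^{\<otimes>3}; an element of g\<otimes>g\<otimes>g is encoded as
  \<Sum>_{l,m} X l m \<otimes> b_l \<otimes> b_m.  Arguments: exponents a (x1), c2 (x2), c (x3), then l, m.\<close>
definition cybe1 :: "('k::field \<Rightarrow> 'g::ab_group_add \<Rightarrow> 'g) \<Rightarrow> ('g \<Rightarrow> 'g \<Rightarrow> 'g) \<Rightarrow> ('i::finite \<Rightarrow> 'g)
     \<Rightarrow> (int \<Rightarrow> nat \<Rightarrow> 'i \<Rightarrow> 'g) \<Rightarrow> int \<Rightarrow> int \<Rightarrow> nat \<Rightarrow> 'i \<Rightarrow> 'i \<Rightarrow> 'g" where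
  "cybe1 scale br b r a e c l m = Sum_any (\<lambda>p. br (rI r p e l) (r (a - p) c m))"

definition cybe2 :: "('k::field \<Rightarrow> 'g::ab_group_add \<Rightarrow> 'g) \<Rightarrow> ('g \<Rightarrow> 'g \<Rightarrow> 'g) \<Rightarrow> ('i::finite \<Rightarrow> 'g)
     \<Rightarrow> (int \<Rightarrow> nat \<Rightarrow> 'i \<Rightarrow> 'g) \<Rightarrow> int \<Rightarrow> int \<Rightarrow> nat \<Rightarrow> 'i \<Rightarrow> 'i \<Rightarrow> 'g" where
  "cybe2 scale br b r a e c l m = Sum_any (\<lambda>q.
     \<Sum>i\<in>UNIV. scale (killing scale br (br (b i) (r (e - q) c m)) (b l)) (rI r a q i))"

definition cybe3 :: "('k::field \<Rightarrow> 'g::ab_group_add \<Rightarrow> 'g) \<Rightarrow> ('g \<Rightarrow> 'g \<Rightarrow> 'g) \<Rightarrow> ('i::finite \<Rightarrow> 'g)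
     \<Rightarrow> (int \<Rightarrow> nat \<Rightarrow> 'i \<Rightarrow> 'g) \<Rightarrow> int \<Rightarrow> int \<Rightarrow> nat \<Rightarrow> 'i \<Rightarrow> 'i \<Rightarrow> 'g" where
  "cybe3 scale br b r a e c l m = (\<Sum>c1\<in>{..c}. \<Sum>i\<in>UNIV. \<Sum>j\<in>UNIV.
     scale (killing scale br (rbar scale br b r e (c - c1) j) (b l) * killing scale br (br (b i) (b j)) (b m))
           (r a c1 i))"

definition normalized_formal_gen_r_matrix :: "('k::field \<Rightarrow> 'g::ab_group_add \<Rightarrow> 'g) \<Rightarrow> ('g \<Rightarrow> 'g \<Rightarrow> 'g)
     \<Rightarrow> ('i::finite \<Rightarrow> 'g) \<Rightarrow> (int \<Rightarrow> nat \<Rightarrow> 'i \<Rightarrow> 'g) \<Rightarrow> bool" where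
  "normalized_formal_gen_r_matrix scale br b r \<longleftrightarrow>
     normalized_standard_form b r \<and>
     (\<forall>a e c l m. cybe1 scale br b r a e c l m + cybe2 scale br b r a e c l m + cybe3 scale br b r a e c l m = 0)"

section \<open>Laurent series g((z)), encoded as int \<Rightarrow> 'g (coefficient of z^n)\<close>

definition laurent_span :: "('k::field \<Rightarrow> 'g::ab_group_add \<Rightarrow> 'g) \<Rightarrow> (int \<Rightarrow> 'g) set \<Rightarrow> (int \<Rightarrow> 'g) set" where
  "laurent_span scale S =
     {f. \<exists>T c. finite T \<and> T \<subseteq> S \<and> f = (\<lambda>n. \<Sum>v\<in>T. scale (c v) (v n))}"

definition laurent_br :: "('g::ab_group_add \<Rightarrow> 'g \<Rightarrow> 'g) \<Rightarrow> (int \<Rightarrow> 'g) \<Rightarrow> (int \<Rightarrow> 'g) \<Rightarrow> int \<Rightarrow> 'g" where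
  "laurent_br br f h n = Sum_any (\<lambda>m. br (f m) (h (n - m)))"

inductive_set lie_gen :: "('k::field \<Rightarrow> 'g::ab_group_add \<Rightarrow> 'g) \<Rightarrow> ('g \<Rightarrow> 'g \<Rightarrow> 'g) \<Rightarrow> (int \<Rightarrow> 'g) set \<Rightarrow> (int \<Rightarrow> 'g) set"
  for scale br S where
  base: "f \<in> S \<Longrightarrow> f \<in> lie_gen scale br S"
| zero: "(\<lambda>n. 0) \<in> lie_gen scale br S"
| add: "f \<in> lie_gen scale br S \<Longrightarrow> h \<in> lie_gen scale br S \<Longrightarrow> (\<lambda>n. f n + h n) \<in> lie_gen scale br S"
| smult: "f \<in> lie_gen scale br S \<Longrightarrow> (\<lambda>n. scale c (f n)) \<in> lie_gen scale br S"
| bracket: "f \<in> lie_gen scale br S \<Longrightarrow> h \<in> lie_gen scale br S \<Longrightarrow> laurent_br br f h \<in> lie_gen scale br S"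

definition gr :: "('k::field \<Rightarrow> 'g::ab_group_add \<Rightarrow> 'g) \<Rightarrow> (int \<Rightarrow> nat \<Rightarrow> 'i \<Rightarrow> 'g) \<Rightarrow> (int \<Rightarrow> 'g) set" where
  "gr scale r = laurent_span scale {(\<lambda>n. r n k i) | k i. True}"

definition zinv_power_series :: "(int \<Rightarrow> 'g::zero) set" where
  "zinv_power_series = {f. \<forall>n. n < -1 \<longrightarrow> f n = 0}"

end

theory Submission
  imports Defs "HOL-Library.Function_Algebras"
begin

lemma sum_fun_apply': "(\<Sum>x\<in>A. F x) n = (\<Sum>x\<in>A. F x n)"
  by (induction A rule: infinite_finite_induct) auto

locale LSetup =
  fixes scale :: "'k::field_char_0 \<Rightarrow> 'g::ab_group_add \<Rightarrow> 'g"
    and br :: "'g \<Rightarrow> 'g \<Rightarrow> 'g"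
    and b :: "'i::finite \<Rightarrow> 'g"
    and r :: "int \<Rightarrow> nat \<Rightarrow> 'i \<Rightarrow> 'g"
  assumes ss: "semisimple scale br"
    and basis: "finite_dimensional_vector_space scale (range b)"
    and inj: "inj b"
    and orthonormal: "\<And>i j. killing scale br (b i) (b j) = (if i = j then 1 else 0)"
    and rmat: "normalized_formal_gen_r_matrix scale br b r"
begin

interpretation V: finite_dimensional_vector_space scale "range b" by (rule basis)

lemma lie: "lie_algebra scale br" using ss unfolding semisimple_def by auto

lemma br_lin2: "Vector_Spaces.linear scale scale (br x)" using lie unfolding lie_algebra_def by auto
lemma br_lin1: "Vector_Spaces.linear scale scale (\<lambda>x. br x y)" using lie unfolding lie_algebra_def by auto

lemma br_add1: "br (x + y) z = br x z + br y z"
  using br_lin1[of z] unfolding Vector_Spaces.linear_iff by auto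
lemma br_add2: "br z (x + y) = br z x + br z y"
  using br_lin2[of z] unfolding Vector_Spaces.linear_iff by auto
lemma br_scale1: "br (scale c x) z = scale c (br x z)"
  using br_lin1[of z] unfolding Vector_Spaces.linear_iff by auto
lemma br_scale2: "br z (scale c x) = scale c (br z x)"
  using br_lin2[of z] unfolding Vector_Spaces.linear_iff by auto
lemma br_zero1[simp]: "br 0 z = 0"
  using br_scale1[of 0 0 z] by simp
lemma br_zero2[simp]: "br z 0 = 0"
  using br_scale2[of z 0 0] by simp
lemma br_alt: "br x x = 0" using lie unfolding lie_algebra_def by auto
lemma br_anti: "br y x = - br x y"
proof -
  have "0 = br (x+y) (x+y)" by (simp add: br_alt)
  also have "\<dots> = br x y + br y x" by (simp only: br_add1 br_add2 br_alt[of x] br_alt[of y]) simp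
  finally have h: "0 = br x y + br y x" .
  show ?thesis by (metis h add.commute eq_neg_iff_add_eq_0)
qed
lemma br_sum1: "br (\<Sum>i\<in>A. f i) z = (\<Sum>i\<in>A. br (f i) z)"
  by (induction A rule: infinite_finite_induct) (auto simp: br_add1)
lemma br_sum2: "br z (\<Sum>i\<in>A. f i) = (\<Sum>i\<in>A. br z (f i))"
  by (induction A rule: infinite_finite_induct) (auto simp: br_add2)

definition coord :: "'i \<Rightarrow> 'g \<Rightarrow> 'k" where
  "coord i y = V.representation (range b) y (b i)"

lemma indep: "V.independent (range b)" using V.independent_Basis .
lemma spanU: "V.span (range b) = UNIV" using V.span_Basis .

lemma expand: "y = (\<Sum>i\<in>UNIV. scale (coord i y) (b i))"
proof -
  have "(\<Sum>v\<in>range b. scale (V.representation (range b) y v) v) = y"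
    by (rule V.sum_representation_eq) (auto simp: indep spanU)
  moreover have "(\<Sum>v\<in>range b. scale (V.representation (range b) y v) v)
     = (\<Sum>i\<in>UNIV. scale (coord i y) (b i))"
    by (subst sum.reindex) (auto simp: inj coord_def)
  ultimately show ?thesis by simp
qed

lemma coord_b: "coord i (b j) = (if i = j then 1 else 0)"
  unfolding coord_def using V.representation_basis[OF indep, of "b j"] inj
  by (auto simp: inj_eq)

lemma coord_add: "coord i (x + y) = coord i x + coord i y"
  unfolding coord_def by (subst V.representation_add) (auto simp: indep spanU)
lemma coord_scale: "coord i (scale c x) = c * coord i x"
  unfolding coord_def by (subst V.representation_scale) (auto simp: indep spanU)
lemma coord_zero[simp]: "coord i 0 = 0"
  unfolding coord_def by (simp add: V.representation_zero)
lemma coord_sum: "coord i (\<Sum>j\<in>A. f j) = (\<Sum>j\<in>A. coord i (f j))"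
  by (induction A rule: infinite_finite_induct) (auto simp: coord_add)
lemma coord_lin: "Vector_Spaces.linear scale (*) (coord i)"
  unfolding coord_def[abs_def] using V.linear_representation[OF indep spanU] .

lemma coord_expand: "(\<Sum>j\<in>UNIV. scale (t j) (b j)) = y \<Longrightarrow> coord i y = t i"
  by (auto simp: coord_sum coord_scale coord_b if_distrib cong: if_cong)

lemma sum_indep: "(\<Sum>j\<in>UNIV. scale (t j) (b j)) = 0 \<Longrightarrow> t i = 0"
  using coord_expand[of t 0 i] by simp

definition B0 where "B0 = (SOME B. finite B \<and> \<not> V.dependent B \<and> V.span B = UNIV)"
lemma B0: "finite B0 \<and> \<not> V.dependent B0 \<and> V.span B0 = UNIV"
  unfolding B0_def by (rule someI[of _ "range b"]) (auto simp: indep spanU)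

lemma killing_eq: "killing scale br x y = (\<Sum>v\<in>B0. V.representation B0 (br x (br y v)) v)"
  unfolding killing_def lin_trace_def Let_def B0_def ..

lemma killing_add1: "killing scale br (x1 + x2) y = killing scale br x1 y + killing scale br x2 y"
  unfolding killing_eq br_add1 using B0
  by (subst V.representation_add) (auto simp: sum.distrib)

lemma killing_scale1: "killing scale br (scale c x) y = c * killing scale br x y"
  unfolding killing_eq br_scale1 using B0
  by (subst V.representation_scale) (auto simp: sum_distrib_left)

lemma killing_zero1[simp]: "killing scale br 0 y = 0"
  using killing_scale1[of 0 0 y] by simp

lemma killing_sum1: "killing scale br (\<Sum>i\<in>A. scale (t i) (z i)) y = (\<Sum>i\<in>A. t i * killing scale br (z i) y)"
  by (induction A rule: infinite_finite_induct) (auto simp: killing_add1 killing_scale1)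

lemma killing_coord: "killing scale br x (b l) = coord l x"
proof -
  have "killing scale br x (b l) = killing scale br (\<Sum>i\<in>UNIV. scale (coord i x) (b i)) (b l)"
    by (subst expand[of x]) simp
  also have "\<dots> = (\<Sum>i\<in>UNIV. coord i x * (if i = l then 1 else 0))"
    by (simp add: killing_sum1 orthonormal)
  also have "\<dots> = coord l x" by (simp add: if_distrib cong: if_cong)
  finally show ?thesis .
qed

lemma nondeg: "(\<And>l. killing scale br y (b l) = 0) \<Longrightarrow> y = 0"
  by (subst expand) (simp add: killing_coord)

lemma central_zero:
  assumes h: "\<And>m. br x (b m) = 0"
  shows "x = 0"
proof -
  have c: "br x y = 0" for y
    by (subst expand[of y]) (simp add: br_sum2 br_scale2 h)
  define I where "I = V.span {x}"
  have Ieq: "I = range (\<lambda>c. scale c x)" unfolding I_def by (rule V.span_singleton)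
  have id: "lie_ideal scale br I"
    unfolding lie_ideal_def
  proof
    show "V.subspace I" unfolding I_def by simp
    show "\<forall>u y. y \<in> I \<longrightarrow> br u y \<in> I"
    proof (intro allI impI)
      fix u y assume "y \<in> I"
      then obtain c where "y = scale c x" using Ieq by auto
      hence "br u y = 0" by (simp add: br_scale2 br_anti[of u x] c)
      thus "br u y \<in> I" unfolding I_def by (simp add: V.span_zero)
    qed
  qed
  have set0: "{br a c |a c. a \<in> I \<and> c \<in> I} = {0}"
  proof -
    have "br a d = 0" if "a \<in> I" "d \<in> I" for a d
      using that by (auto simp: Ieq br_scale1 c)
    moreover have "0 \<in> I" unfolding I_def by (simp add: V.span_zero)
    ultimately show ?thesis by force
  qed
  have "derived scale br (Suc 0) I = {0}"
    by (simp add: set0)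
  hence "solvable_ideal scale br I" unfolding solvable_ideal_def using id by blast
  hence "I = {0}" using ss unfolding semisimple_def by blast
  moreover have "x \<in> I" unfolding I_def by (simp add: V.span_base)
  ultimately show ?thesis by simp
qed

definition sc :: "'k \<Rightarrow> (int \<Rightarrow> 'g) \<Rightarrow> (int \<Rightarrow> 'g)" where
  "sc c f = (\<lambda>n. scale c (f n))"

lemma sc_apply: "sc c f n = scale c (f n)" by (simp add: sc_def)

lemma sc_eq: "(\<lambda>n. scale c (f n)) = sc c f" by (simp add: sc_def)

lemma SV_vs: "vector_space sc"
  by unfold_locales (auto simp: fun_eq_iff sc_apply V.scale_right_distrib V.scale_left_distrib)

interpretation SV: vector_space sc by (rule SV_vs)

lemma laurent_span_eq: "laurent_span scale S = SV.span S"
  unfolding laurent_span_def SV.span_explicit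
  by (auto simp: fun_eq_iff sum_fun_apply' sc_apply)

definition R :: "nat \<Rightarrow> 'i \<Rightarrow> int \<Rightarrow> 'g" where "R k i = (\<lambda>n. r n k i)"
definition G where "G = {R k i | k i. True}"
definition G0 where "G0 = {R 0 i | i. True}"

lemma gr_eq: "gr scale r = SV.span G"
  unfolding gr_def laurent_span_eq G_def R_def ..

lemma r_neg: "n < 0 \<Longrightarrow> r n k i = (if n = - int k - 1 then b i else 0)"
proof -
  assume n: "n < 0"
  have "rzero b r n k i = 0"
    using rmat n unfolding normalized_formal_gen_r_matrix_def normalized_standard_form_def by blast
  hence "r n k i = gam b n k i" unfolding rzero_def by simp
  thus ?thesis unfolding gam_def by simp
qed

lemma r_neg0: "n < 0 \<Longrightarrow> n \<noteq> - int k - 1 \<Longrightarrow> r n k i = 0"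
  by (simp add: r_neg)

definition bb :: "(int \<Rightarrow> 'g) \<Rightarrow> bool" where "bb f \<longleftrightarrow> (\<exists>N. \<forall>n<N. f n = 0)"

lemma bb_R: "bb (R k i)"
  unfolding bb_def R_def by (rule exI[of _ "- int k - 1"]) (auto simp: r_neg0)

lemma bb_subspace: "SV.subspace (Collect bb)"
proof (rule SV.subspaceI)
  show "0 \<in> Collect bb" by (auto simp: bb_def)
  show "x + y \<in> Collect bb" if hxy: "x \<in> Collect bb" "y \<in> Collect bb" for x y
  proof -
    obtain N M where "\<forall>n<N. x n = 0" "\<forall>n<M. y n = 0" using hxy unfolding bb_def mem_Collect_eq by blast
    thus ?thesis by (auto simp: bb_def intro!: exI[of _ "min N M"])
  qed
  show "sc c x \<in> Collect bb" if "x \<in> Collect bb" for c x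
    using that by (auto simp: bb_def sc_apply)
qed

lemma lb_expand:
  assumes "\<forall>m<N. f m = 0" "\<forall>m<M. h m = 0"
  shows "laurent_br br f h n = (\<Sum>m\<in>{N..n-M}. br (f m) (h (n-m)))"
  unfolding laurent_br_def
proof (rule Sum_any.expand_superset)
  show "finite {N..n-M}" by simp
  show "{a. br (f a) (h (n - a)) \<noteq> 0} \<subseteq> {N..n - M}"
  proof
    fix m assume "m \<in> {a. br (f a) (h (n - a)) \<noteq> 0}"
    hence ne: "br (f m) (h (n - m)) \<noteq> 0" by simp
    have "\<not> m < N" using ne assms by auto
    moreover have "\<not> n - m < M" using ne assms by auto
    ultimately show "m \<in> {N..n-M}" by simp
  qed
qed

lemma bb_obtain: "bb f \<Longrightarrow> bb g \<Longrightarrow> bb h \<Longrightarrow> \<exists>N. (\<forall>m<N. f m = 0) \<and> (\<forall>m<N. g m = 0) \<and> (\<forall>m<N. h m = 0)"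
proof -
  assume "bb f" "bb g" "bb h"
  then obtain N1 N2 N3 where "\<forall>m<N1. f m = 0" "\<forall>m<N2. g m = 0" "\<forall>m<N3. h m = 0"
    by (auto simp: bb_def)
  thus ?thesis by (intro exI[of _ "min N1 (min N2 N3)"]) auto
qed

lemma lb_add1: "bb f1 \<Longrightarrow> bb f2 \<Longrightarrow> bb h \<Longrightarrow>
   laurent_br br (f1 + f2) h = laurent_br br f1 h + laurent_br br f2 h"
proof -
  assume a: "bb f1" "bb f2" "bb h"
  obtain N where N: "\<forall>m<N. f1 m = 0" "\<forall>m<N. f2 m = 0" "\<forall>m<N. h m = 0"
    using bb_obtain[OF a] by (elim exE conjE)
  have N': "\<forall>m<N. (f1 + f2) m = 0" using N by (simp add: plus_fun_def)
  show ?thesis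
  proof (rule ext)
    fix n
    have "laurent_br br (f1 + f2) h n = (\<Sum>m\<in>{N..n-N}. br ((f1 + f2) m) (h (n-m)))"
      by (rule lb_expand[OF N' N(3)])
    also have "\<dots> = (\<Sum>m\<in>{N..n-N}. br (f1 m) (h (n-m))) + (\<Sum>m\<in>{N..n-N}. br (f2 m) (h (n-m)))"
      by (simp only: plus_fun_apply br_add1 sum.distrib)
    also have "\<dots> = laurent_br br f1 h n + laurent_br br f2 h n"
      by (simp only: lb_expand[OF N(1) N(3)] lb_expand[OF N(2) N(3)])
    finally show "laurent_br br (f1 + f2) h n = (laurent_br br f1 h + laurent_br br f2 h) n"
      by (simp only: plus_fun_apply)
  qed
qed

lemma lb_add2: "bb f1 \<Longrightarrow> bb f2 \<Longrightarrow> bb h \<Longrightarrow>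
   laurent_br br h (f1 + f2) = laurent_br br h f1 + laurent_br br h f2"
proof -
  assume a: "bb f1" "bb f2" "bb h"
  obtain N where N: "\<forall>m<N. f1 m = 0" "\<forall>m<N. f2 m = 0" "\<forall>m<N. h m = 0"
    using bb_obtain[OF a] by (elim exE conjE)
  have N': "\<forall>m<N. (f1 + f2) m = 0" using N by (simp add: plus_fun_def)
  show ?thesis
  proof (rule ext)
    fix n
    have "laurent_br br h (f1 + f2) n = (\<Sum>m\<in>{N..n-N}. br (h m) ((f1 + f2) (n-m)))"
      by (rule lb_expand[OF N(3) N'])
    also have "\<dots> = (\<Sum>m\<in>{N..n-N}. br (h m) (f1 (n-m))) + (\<Sum>m\<in>{N..n-N}. br (h m) (f2 (n-m)))"
      by (simp only: plus_fun_apply br_add2 sum.distrib)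
    also have "\<dots> = laurent_br br h f1 n + laurent_br br h f2 n"
      by (simp only: lb_expand[OF N(3) N(1)] lb_expand[OF N(3) N(2)])
    finally show "laurent_br br h (f1 + f2) n = (laurent_br br h f1 + laurent_br br h f2) n"
      by (simp only: plus_fun_apply)
  qed
qed

lemma lb_scale1: "bb f \<Longrightarrow> bb h \<Longrightarrow> laurent_br br (sc c f) h = sc c (laurent_br br f h)"
proof -
  assume a: "bb f" "bb h"
  obtain N where N: "\<forall>m<N. f m = 0" "\<forall>m<N. h m = 0"
    using bb_obtain[OF a(1) a(1) a(2)] by (elim exE conjE)
  have N': "\<forall>m<N. (sc c f) m = 0" using N by (simp add: sc_apply)
  show ?thesis
  proof (rule ext)
    fix n
    have "laurent_br br (sc c f) h n = (\<Sum>m\<in>{N..n-N}. br (sc c f m) (h (n-m)))"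
      by (rule lb_expand[OF N' N(2)])
    also have "\<dots> = scale c (\<Sum>m\<in>{N..n-N}. br (f m) (h (n-m)))"
      by (simp only: sc_apply br_scale1 V.scale_sum_right)
    also have "\<dots> = sc c (laurent_br br f h) n"
      by (simp only: lb_expand[OF N(1) N(2)] sc_apply)
    finally show "laurent_br br (sc c f) h n = sc c (laurent_br br f h) n" .
  qed
qed

lemma lb_scale2: "bb f \<Longrightarrow> bb h \<Longrightarrow> laurent_br br h (sc c f) = sc c (laurent_br br h f)"
proof -
  assume a: "bb f" "bb h"
  obtain N where N: "\<forall>m<N. f m = 0" "\<forall>m<N. h m = 0"
    using bb_obtain[OF a(1) a(1) a(2)] by (elim exE conjE)
  have N': "\<forall>m<N. (sc c f) m = 0" using N by (simp add: sc_apply)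
  show ?thesis
  proof (rule ext)
    fix n
    have "laurent_br br h (sc c f) n = (\<Sum>m\<in>{N..n-N}. br (h m) (sc c f (n-m)))"
      by (rule lb_expand[OF N(2) N'])
    also have "\<dots> = scale c (\<Sum>m\<in>{N..n-N}. br (h m) (f (n-m)))"
      by (simp only: sc_apply br_scale2 V.scale_sum_right)
    also have "\<dots> = sc c (laurent_br br h f) n"
      by (simp only: lb_expand[OF N(2) N(1)] sc_apply)
    finally show "laurent_br br h (sc c f) n = sc c (laurent_br br h f) n" .
  qed
qed

lemma lb_zero1: "laurent_br br 0 h = 0"
  unfolding laurent_br_def zero_fun_def br_zero1 Sum_any.neutral ..
lemma lb_zero2: "laurent_br br h 0 = 0"
  unfolding laurent_br_def zero_fun_def br_zero2 Sum_any.neutral ..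

lemma span_br_closed:
  assumes Gbb: "\<And>g. g \<in> H \<Longrightarrow> bb g"
    and cl: "\<And>g1 g2. g1 \<in> H \<Longrightarrow> g2 \<in> H \<Longrightarrow> laurent_br br g1 g2 \<in> SV.span H"
    and f: "f \<in> SV.span H" and h: "h \<in> SV.span H"
  shows "laurent_br br f h \<in> SV.span H"
proof -
  have sbb: "bb x" if "x \<in> SV.span H" for x
    using SV.span_minimal[of H "Collect bb"] bb_subspace Gbb that by auto
  have step1: "laurent_br br g1 h \<in> SV.span H" if g1: "g1 \<in> H" and h: "h \<in> SV.span H" for g1 h
  proof -
    have "h \<in> {h. h \<in> SV.span H \<and> laurent_br br g1 h \<in> SV.span H}"
    proof (rule SV.span_subspace_induct[OF h])
      show "SV.subspace {h. h \<in> SV.span H \<and> laurent_br br g1 h \<in> SV.span H}"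
      proof (rule SV.subspaceI)
        show "0 \<in> {h. h \<in> SV.span H \<and> laurent_br br g1 h \<in> SV.span H}"
          by (simp add: SV.span_zero lb_zero2)
      next
        fix x y assume "x \<in> {h. h \<in> SV.span H \<and> laurent_br br g1 h \<in> SV.span H}"
          "y \<in> {h. h \<in> SV.span H \<and> laurent_br br g1 h \<in> SV.span H}"
        thus "x + y \<in> {h. h \<in> SV.span H \<and> laurent_br br g1 h \<in> SV.span H}"
          using lb_add2[of x y g1] sbb Gbb[OF g1] by (auto intro: SV.span_add)
      next
        fix c x assume "x \<in> {h. h \<in> SV.span H \<and> laurent_br br g1 h \<in> SV.span H}"
        thus "sc c x \<in> {h. h \<in> SV.span H \<and> laurent_br br g1 h \<in> SV.span H}"
          using lb_scale2[of x g1 c] sbb Gbb[OF g1] by (auto intro: SV.span_scale)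
      qed
    next
      fix x assume "x \<in> H"
      thus "x \<in> {h. h \<in> SV.span H \<and> laurent_br br g1 h \<in> SV.span H}"
        using cl[OF g1] by (auto intro: SV.span_base)
    qed
    thus ?thesis by simp
  qed
  have "f \<in> {f. f \<in> SV.span H \<and> laurent_br br f h \<in> SV.span H}"
  proof (rule SV.span_subspace_induct[OF f])
    show "SV.subspace {f. f \<in> SV.span H \<and> laurent_br br f h \<in> SV.span H}"
    proof (rule SV.subspaceI)
      show "0 \<in> {f. f \<in> SV.span H \<and> laurent_br br f h \<in> SV.span H}"
        by (simp add: SV.span_zero lb_zero1)
    next
      fix x y assume "x \<in> {f. f \<in> SV.span H \<and> laurent_br br f h \<in> SV.span H}"
        "y \<in> {f. f \<in> SV.span H \<and> laurent_br br f h \<in> SV.span H}"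
      thus "x + y \<in> {f. f \<in> SV.span H \<and> laurent_br br f h \<in> SV.span H}"
        using lb_add1[of x y h] sbb h by (auto intro: SV.span_add)
    next
      fix c x assume "x \<in> {f. f \<in> SV.span H \<and> laurent_br br f h \<in> SV.span H}"
      thus "sc c x \<in> {f. f \<in> SV.span H \<and> laurent_br br f h \<in> SV.span H}"
        using lb_scale1[of x h c] sbb h by (auto intro: SV.span_scale)
    qed
  next
    fix x assume "x \<in> H"
    thus "x \<in> {f. f \<in> SV.span H \<and> laurent_br br f h \<in> SV.span H}"
      using step1[OF _ h] by (auto intro: SV.span_base)
  qed
  thus ?thesis by simp
qed

lemma cybe_zero: "cybe1 scale br b r a e c l m + cybe2 scale br b r a e c l m + cybe3 scale br b r a e c l m = 0"
  using rmat unfolding normalized_formal_gen_r_matrix_def by blast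

lemma cybe1_eq: "cybe1 scale br b r a (int e) c l m = laurent_br br (R e l) (R c m) a"
  unfolding cybe1_def laurent_br_def rI_def R_def by simp

lemma cybe2_expand: "cybe2 scale br b r a e c l m =
   (\<Sum>q\<in>{0..e + int c + 1}. \<Sum>i\<in>UNIV. scale (killing scale br (br (b i) (r (e - q) c m)) (b l)) (r a (nat q) i))"
proof -
  have "cybe2 scale br b r a e c l m =
     (\<Sum>q\<in>{0..e + int c + 1}. \<Sum>i\<in>UNIV. scale (killing scale br (br (b i) (r (e - q) c m)) (b l)) (rI r a q i))"
    unfolding cybe2_def
  proof (rule Sum_any.expand_superset)
    show "finite {0..e + int c + 1}" by simp
    show "{q. (\<Sum>i\<in>UNIV. scale (killing scale br (br (b i) (r (e - q) c m)) (b l)) (rI r a q i)) \<noteq> 0}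
          \<subseteq> {0..e + int c + 1}"
    proof
      fix q assume "q \<in> {q. (\<Sum>i\<in>UNIV. scale (killing scale br (br (b i) (r (e - q) c m)) (b l)) (rI r a q i)) \<noteq> 0}"
      hence ne: "(\<Sum>i\<in>UNIV. scale (killing scale br (br (b i) (r (e - q) c m)) (b l)) (rI r a q i)) \<noteq> 0" by simp
      have "\<not> q < 0"
      proof
        assume "q < 0" hence "rI r a q i = 0" for i by (simp add: rI_def)
        thus False using ne by simp
      qed
      moreover have "\<not> q > e + int c + 1"
      proof
        assume "q > e + int c + 1" hence "r (e - q) c m = 0" by (intro r_neg0) auto
        thus False using ne by simp
      qed
      ultimately show "q \<in> {0..e + int c + 1}" by simp
    qed
  qed
  also have "\<dots> = (\<Sum>q\<in>{0..e + int c + 1}. \<Sum>i\<in>UNIV. scale (killing scale br (br (b i) (r (e - q) c m)) (b l)) (r a (nat q) i))"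
    by (rule sum.cong) (auto simp: rI_def)
  finally show ?thesis .
qed

lemma fun_sum_sc: "(\<lambda>a. \<Sum>x\<in>A. scale (k x) (F x a)) = (\<Sum>x\<in>A. sc (k x) (\<lambda>a. F x a))"
  by (rule ext) (simp add: sum_fun_apply' sc_apply)

lemma fun_sum: "(\<lambda>a. \<Sum>x\<in>A. F x a) = (\<Sum>x\<in>A. (\<lambda>a. F x a))"
  by (rule ext) (simp add: sum_fun_apply' sc_apply)

lemma cybe2_fun: "(\<lambda>a. cybe2 scale br b r a e c l m) =
   (\<Sum>q\<in>{0..e + int c + 1}. \<Sum>i\<in>UNIV. sc (killing scale br (br (b i) (r (e - q) c m)) (b l)) (R (nat q) i))"
  by (rule ext) (simp add: cybe2_expand sum_fun_apply' R_def sc_apply)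

lemma cybe3_fun: "(\<lambda>a. cybe3 scale br b r a e c l m) =
   (\<Sum>c1\<in>{..c}. \<Sum>i\<in>UNIV. \<Sum>j\<in>UNIV.
     sc (killing scale br (rbar scale br b r e (c - c1) j) (b l) * killing scale br (br (b i) (b j)) (b m)) (R c1 i))"
  by (rule ext) (simp add: cybe3_def sum_fun_apply' R_def sc_apply)

lemma R_in_G: "R k i \<in> G" unfolding G_def by auto

lemma partA: "laurent_br br (R e l) (R c m) \<in> SV.span G"
proof -
  have eq: "laurent_br br (R e l) (R c m) =
     - ((\<lambda>a. cybe2 scale br b r a (int e) c l m) + (\<lambda>a. cybe3 scale br b r a (int e) c l m))"
  proof (rule ext)
    fix a
    have "cybe1 scale br b r a (int e) c l m + cybe2 scale br b r a (int e) c l m + cybe3 scale br b r a (int e) c l m = 0"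
      by (rule cybe_zero)
    thus "laurent_br br (R e l) (R c m) a =
      (- ((\<lambda>a. cybe2 scale br b r a (int e) c l m) + (\<lambda>a. cybe3 scale br b r a (int e) c l m))) a"
      unfolding cybe1_eq
    proof -
      assume h: "laurent_br br (R e l) (R c m) a + cybe2 scale br b r a (int e) c l m + cybe3 scale br b r a (int e) c l m = 0"
      have "laurent_br br (R e l) (R c m) a = - (cybe2 scale br b r a (int e) c l m + cybe3 scale br b r a (int e) c l m)"
        using h unfolding eq_neg_iff_add_eq_0 by (simp add: add.assoc)
      thus ?thesis by simp
    qed
  qed
  have c2: "(\<lambda>a. cybe2 scale br b r a (int e) c l m) \<in> SV.span G"
    unfolding cybe2_fun by (intro SV.span_sum SV.span_scale SV.span_base R_in_G)
  have c3: "(\<lambda>a. cybe3 scale br b r a (int e) c l m) \<in> SV.span G"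
    unfolding cybe3_fun by (intro SV.span_sum SV.span_scale SV.span_base R_in_G)
  show ?thesis unfolding eq by (intro SV.span_neg SV.span_add c2 c3)
qed

lemma kvs: "vector_space ((*) :: 'k \<Rightarrow> 'k \<Rightarrow> 'k)"
  by unfold_locales (auto simp: algebra_simps)

lemma lin_zero: "Vector_Spaces.linear scale (*) (\<lambda>x. 0)"
  unfolding Vector_Spaces.linear_iff using V.vector_space_axioms kvs by auto
lemma lin_add: "Vector_Spaces.linear scale (*) f \<Longrightarrow> Vector_Spaces.linear scale (*) g \<Longrightarrow>
   Vector_Spaces.linear scale (*) (\<lambda>x. f x + g x)"
  unfolding Vector_Spaces.linear_iff by (auto simp: algebra_simps)
lemma lin_scale: "Vector_Spaces.linear scale (*) f \<Longrightarrow> Vector_Spaces.linear scale (*) (\<lambda>x. c * f x)"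
  unfolding Vector_Spaces.linear_iff by (auto simp: algebra_simps)

definition Sr where "Sr = {(\<lambda>n. \<Sum>i\<in>UNIV. scale (\<alpha> (b i)) (r n 0 i)) | \<alpha>. Vector_Spaces.linear scale (*) \<alpha>}"

lemma Sr_elem: "(\<lambda>n. \<Sum>i\<in>UNIV. scale (\<alpha> (b i)) (r n 0 i)) = (\<Sum>i\<in>UNIV. sc (\<alpha> (b i)) (R 0 i))"
  by (rule ext) (simp add: sum_fun_apply' R_def sc_apply)

lemma R0_in_Sr: "R 0 i0 \<in> Sr"
proof -
  have "(\<Sum>i\<in>UNIV. scale (coord i0 (b i)) (r n 0 i)) = (\<Sum>i\<in>UNIV. if i0 = i then r n 0 i else 0)" for n
    by (rule sum.cong) (auto simp: coord_b)
  hence "(\<lambda>n. \<Sum>i\<in>UNIV. scale (coord i0 (b i)) (r n 0 i)) = R 0 i0"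
    by (simp add: R_def)
  thus ?thesis unfolding Sr_def using coord_lin[of i0]
    by (intro CollectI exI[of _ "coord i0"]) simp
qed

lemma Sr_subspace: "SV.subspace Sr"
proof (rule SV.subspaceI)
  show "0 \<in> Sr" unfolding Sr_def using lin_zero
    by (intro CollectI exI[of _ "\<lambda>x. 0"]) (auto simp: zero_fun_def)
next
  fix x y assume "x \<in> Sr" "y \<in> Sr"
  then obtain \<alpha> \<beta> where a: "Vector_Spaces.linear scale (*) \<alpha>" "x = (\<lambda>n. \<Sum>i\<in>UNIV. scale (\<alpha> (b i)) (r n 0 i))"
    and bb: "Vector_Spaces.linear scale (*) \<beta>" "y = (\<lambda>n. \<Sum>i\<in>UNIV. scale (\<beta> (b i)) (r n 0 i))"
    unfolding Sr_def by blast
  have "x + y = (\<lambda>n. \<Sum>i\<in>UNIV. scale (\<alpha> (b i) + \<beta> (b i)) (r n 0 i))"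
    using a bb by (auto simp: fun_eq_iff V.scale_left_distrib sum.distrib)
  thus "x + y \<in> Sr" unfolding Sr_def using lin_add[OF a(1) bb(1)]
    by (intro CollectI exI[of _ "\<lambda>x. \<alpha> x + \<beta> x"]) simp
next
  fix c x assume "x \<in> Sr"
  then obtain \<alpha> where a: "Vector_Spaces.linear scale (*) \<alpha>" "x = (\<lambda>n. \<Sum>i\<in>UNIV. scale (\<alpha> (b i)) (r n 0 i))"
    unfolding Sr_def by blast
  have "sc c x = (\<lambda>n. \<Sum>i\<in>UNIV. scale (c * \<alpha> (b i)) (r n 0 i))"
    using a by (auto simp: fun_eq_iff V.scale_sum_right sc_apply)
  thus "sc c x \<in> Sr" unfolding Sr_def using lin_scale[OF a(1)]
    by (intro CollectI exI[of _ "\<lambda>x. c * \<alpha> x"]) simp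
qed

lemma Sr_eq: "Sr = SV.span G0"
proof
  show "Sr \<subseteq> SV.span G0"
  proof
    fix x assume "x \<in> Sr"
    then obtain \<alpha> where x: "x = (\<lambda>n. \<Sum>i\<in>UNIV. scale (\<alpha> (b i)) (r n 0 i))" unfolding Sr_def by blast
    have "(\<Sum>i\<in>UNIV. sc (\<alpha> (b i)) (R 0 i)) \<in> SV.span G0"
      by (intro SV.span_sum SV.span_scale SV.span_base) (auto simp: G0_def)
    thus "x \<in> SV.span G0" unfolding x Sr_elem .
  qed
  show "SV.span G0 \<subseteq> Sr"
    by (rule SV.span_minimal) (auto simp: G0_def R0_in_Sr Sr_subspace)
qed

abbreviation "L \<equiv> lie_gen scale br Sr"

lemma L_subspace: "SV.subspace L"
proof (rule SV.subspaceI)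
  show "0 \<in> L" using lie_gen.zero[of scale br Sr] by (simp add: zero_fun_def)
  show "x + y \<in> L" if "x \<in> L" "y \<in> L" for x y
    using lie_gen.add[OF that] by (simp add: plus_fun_def)
  show "sc c x \<in> L" if "x \<in> L" for c x
    using lie_gen.smult[OF that, of c] by (simp only: sc_eq)
qed

lemma L_span: "f \<in> SV.span H \<Longrightarrow> H \<subseteq> L \<Longrightarrow> f \<in> L"
  using SV.span_minimal[OF _ L_subspace] by blast

lemma G_bb: "g \<in> G \<Longrightarrow> bb g" unfolding G_def using bb_R by auto

lemma L_sub_gr: "f \<in> L \<Longrightarrow> f \<in> SV.span G"
proof (induction rule: lie_gen.induct)
  case (base f)
  have "G0 \<subseteq> G" by (auto simp: G0_def G_def)
  thus ?case using base Sr_eq SV.span_mono[of G0 G] by blast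
next
  case zero
  show ?case using SV.span_zero by (simp add: zero_fun_def)
next
  case (add f h)
  thus ?case using SV.span_add[OF add.IH] by (simp add: plus_fun_def)
next
  case (smult f c)
  thus ?case using SV.span_scale[OF smult.IH, of c] by (simp only: sc_eq)
next
  case (bracket f h)
  show ?case
  proof (rule span_br_closed[OF G_bb _ bracket.IH])
    fix g1 g2 assume "g1 \<in> G" "g2 \<in> G"
    thus "laurent_br br g1 g2 \<in> SV.span G" using partA unfolding G_def by auto
  qed
qed

definition Phi :: "nat \<Rightarrow> (int \<Rightarrow> 'g) \<Rightarrow> (int \<Rightarrow> 'g)" where
  "Phi K f = (\<Sum>k\<in>{1..K}. \<Sum>i\<in>UNIV. sc (coord i (f (- int k - 1))) (R k i))"

lemma Phi_add: "Phi K (f + g) = Phi K f + Phi K g"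
  unfolding Phi_def by (simp add: coord_add SV.scale_left_distrib sum.distrib)

lemma Phi_scale: "Phi K (sc c f) = sc c (Phi K f)"
  unfolding Phi_def by (simp add: coord_scale sc_apply SV.scale_sum_right)

lemma Phi_zero: "Phi K 0 = 0"
  unfolding Phi_def by simp

lemma Phi_R_k: "(\<Sum>i\<in>UNIV. sc (coord i (R k0 i0 (- int k - 1))) (R k i)) = (if k = k0 then R k0 i0 else 0)"
proof (cases "k = k0")
  case True
  have "R k0 i0 (- int k - 1) = b i0" using True by (simp add: R_def r_neg)
  hence "(\<Sum>i\<in>UNIV. sc (coord i (R k0 i0 (- int k - 1))) (R k i)) = (\<Sum>i\<in>UNIV. if i = i0 then R k i else 0)"
    by (intro sum.cong) (auto simp: coord_b)
  thus ?thesis using True by simp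
next
  case False
  have "R k0 i0 (- int k - 1) = 0" using False by (simp add: R_def r_neg0)
  thus ?thesis using False by simp
qed

lemma Phi_R: "k0 \<le> K \<Longrightarrow> Phi K (R k0 i0) = (if 1 \<le> k0 then R k0 i0 else 0)"
  unfolding Phi_def Phi_R_k by (simp add: sum.delta')

definition PP where "PP f \<longleftrightarrow> (\<exists>N. \<forall>K\<ge>N. f - Phi K f \<in> SV.span G0)"

lemma PP_subspace: "SV.subspace (Collect PP)"
proof (rule SV.subspaceI)
  show "0 \<in> Collect PP" by (auto simp: PP_def Phi_zero SV.span_zero)
next
  fix x y assume "x \<in> Collect PP" "y \<in> Collect PP"
  then obtain N M where N: "\<forall>K\<ge>N. x - Phi K x \<in> SV.span G0" and M: "\<forall>K\<ge>M. y - Phi K y \<in> SV.span G0"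
    unfolding PP_def mem_Collect_eq by blast
  have "(x + y) - Phi K (x + y) \<in> SV.span G0" if "K \<ge> max N M" for K
  proof -
    have eq: "(x + y) - Phi K (x + y) = (x - Phi K x) + (y - Phi K y)" by (simp add: Phi_add algebra_simps)
    have mem: "(x - Phi K x) + (y - Phi K y) \<in> SV.span G0"
      using N M that by (intro SV.span_add) auto
    show ?thesis unfolding eq by (rule mem)
  qed
  thus "x + y \<in> Collect PP" unfolding PP_def by blast
next
  fix c x assume "x \<in> Collect PP"
  then obtain N where N: "\<forall>K\<ge>N. x - Phi K x \<in> SV.span G0"
    unfolding PP_def mem_Collect_eq by blast
  have "sc c x - Phi K (sc c x) \<in> SV.span G0" if "K \<ge> N" for K
  proof -
    have "sc c x - Phi K (sc c x) = sc c (x - Phi K x)" by (simp add: Phi_scale SV.scale_right_diff_distrib)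
    thus ?thesis using N that by (auto intro: SV.span_scale)
  qed
  thus "sc c x \<in> Collect PP" unfolding PP_def by blast
qed

lemma PP_R: "PP (R k0 i0)"
  unfolding PP_def
proof (intro exI[of _ k0] allI impI)
  fix K assume "k0 \<le> K"
  thus "R k0 i0 - Phi K (R k0 i0) \<in> SV.span G0"
    by (cases k0) (auto simp: Phi_R SV.span_zero G0_def intro!: SV.span_base exI[of _ i0])
qed

lemma zinv_in_span0: "f \<in> SV.span G \<Longrightarrow> f \<in> zinv_power_series \<Longrightarrow> f \<in> SV.span G0"
proof -
  assume f: "f \<in> SV.span G" and z: "f \<in> zinv_power_series"
  have "f \<in> Collect PP"
    by (rule SV.span_subspace_induct[OF f PP_subspace]) (auto simp: G_def PP_R)
  then obtain N where N: "f - Phi N f \<in> SV.span G0" unfolding PP_def by auto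
  have "Phi N f = 0"
  proof -
    have "f (- int k - 1) = 0" if "k \<in> {1..N}" for k
      using z that unfolding zinv_power_series_def by auto
    thus ?thesis unfolding Phi_def by simp
  qed
  thus ?thesis using N by simp
qed

lemma part1: "gr scale r \<inter> zinv_power_series = Sr"
proof
  show "gr scale r \<inter> zinv_power_series \<subseteq> Sr"
    using zinv_in_span0 by (auto simp: gr_eq Sr_eq)
  show "Sr \<subseteq> gr scale r \<inter> zinv_power_series"
  proof
    fix f assume f: "f \<in> Sr"
    have "G0 \<subseteq> G" by (auto simp: G0_def G_def)
    hence "f \<in> gr scale r" using f SV.span_mono[of G0 G] by (auto simp: gr_eq Sr_eq)
    moreover have "f \<in> zinv_power_series"
    proof -
      obtain \<alpha> where fa: "f = (\<lambda>n. \<Sum>i\<in>UNIV. scale (\<alpha> (b i)) (r n 0 i))" using f unfolding Sr_def by blast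
      have "f n = 0" if "n < -1" for n
        using that by (simp add: fa r_neg0)
      thus ?thesis unfolding zinv_power_series_def by auto
    qed
    ultimately show "f \<in> gr scale r \<inter> zinv_power_series" by simp
  qed
qed

lemma cybe2_e0: "cybe2 scale br b r a 0 c l m =
   (\<Sum>i\<in>UNIV. scale (killing scale br (br (b i) (r 0 c m)) (b l)) (r a 0 i)) +
   (\<Sum>i\<in>UNIV. scale (killing scale br (br (b i) (b m)) (b l)) (r a (Suc c) i))"
proof -
  define F where "F q = (\<Sum>i\<in>UNIV. scale (killing scale br (br (b i) (r (0 - q) c m)) (b l)) (r a (nat q) i))" for q
  have "cybe2 scale br b r a 0 c l m = (\<Sum>q\<in>{0..0 + int c + 1}. F q)"
    unfolding cybe2_expand F_def ..
  also have "\<dots> = (\<Sum>q\<in>{0, int c + 1}. F q)"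
  proof (rule sum.mono_neutral_right)
    show "finite {0..0 + int c + 1}" by simp
    show "{0, int c + 1} \<subseteq> {0..0 + int c + 1}" by auto
    show "\<forall>q\<in>{0..0 + int c + 1} - {0, int c + 1}. F q = 0"
    proof
      fix q assume q: "q \<in> {0..0 + int c + 1} - {0, int c + 1}"
      hence "r (0 - q) c m = 0" by (intro r_neg0) auto
      thus "F q = 0" unfolding F_def by simp
    qed
  qed
  also have "\<dots> = F 0 + F (int c + 1)" by simp
  also have "F (int c + 1) = (\<Sum>i\<in>UNIV. scale (killing scale br (br (b i) (b m)) (b l)) (r a (Suc c) i))"
  proof -
    have "r (0 - (int c + 1)) c m = b m" by (simp add: r_neg)
    moreover have "nat (int c + 1) = Suc c" by simp
    ultimately show ?thesis unfolding F_def by simp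
  qed
  finally show ?thesis unfolding F_def by simp
qed

definition wv :: "'i \<Rightarrow> 'i \<Rightarrow> 'i \<Rightarrow> 'k" where
  "wv l m i = killing scale br (br (b i) (b m)) (b l)"

lemma partB_step:
  assumes IH: "\<And>c1 i. c1 \<le> c \<Longrightarrow> R c1 i \<in> L"
  shows "(\<Sum>i\<in>UNIV. sc (wv l m i) (R (Suc c) i)) \<in> L"
proof -
  define T where "T = (\<Sum>i\<in>UNIV. sc (wv l m i) (R (Suc c) i))"
  define T0 where "T0 = (\<Sum>i\<in>UNIV. sc (killing scale br (br (b i) (r 0 c m)) (b l)) (R 0 i))"
  define C1 where "C1 = laurent_br br (R 0 l) (R c m)"
  define C3 where "C3 = (\<lambda>a. cybe3 scale br b r a 0 c l m)"
  have eq: "T = - (C1 + C3 + T0)"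
  proof (rule ext)
    fix a
    have z: "cybe1 scale br b r a (int 0) c l m + cybe2 scale br b r a 0 c l m + cybe3 scale br b r a 0 c l m = 0"
      using cybe_zero[of a "int 0" c l m] by simp
    have "C1 a + (T0 a + T a) + C3 a = 0"
      using z unfolding cybe1_eq cybe2_e0 C1_def C3_def T_def T0_def wv_def
      by (simp add: sum_fun_apply' sc_apply R_def)
    hence "T a = - (C1 a + C3 a + T0 a)"
      unfolding eq_neg_iff_add_eq_0 by (simp add: algebra_simps)
    thus "T a = (- (C1 + C3 + T0)) a" by simp
  qed
  have "C1 \<in> L" unfolding C1_def by (intro lie_gen.bracket IH) auto
  moreover have "C3 \<in> L" unfolding C3_def cybe3_fun
    by (intro SV.subspace_sum[OF L_subspace] SV.subspace_scale[OF L_subspace] IH) auto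
  moreover have "T0 \<in> L" unfolding T0_def
    by (intro SV.subspace_sum[OF L_subspace] SV.subspace_scale[OF L_subspace] IH) auto
  ultimately have "- (C1 + C3 + T0) \<in> L"
    by (intro SV.subspace_neg[OF L_subspace] SV.subspace_add[OF L_subspace])
  thus ?thesis using eq T_def by simp
qed

definition sv :: "'k \<Rightarrow> ('i \<Rightarrow> 'k) \<Rightarrow> ('i \<Rightarrow> 'k)" where "sv c t = (\<lambda>i. c * t i)"

lemma sv_apply: "sv c t i = c * t i" by (simp add: sv_def)

lemma FV_vs: "vector_space sv"
  by unfold_locales (auto simp: fun_eq_iff sv_apply algebra_simps)

lemma rank_arg:
  assumes W: "\<And>l m. (\<Sum>i\<in>UNIV. sc (wv l m i) (R k i)) \<in> L"
  shows "R k i0 \<in> L"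
proof -
  interpret FV: vector_space sv by (rule FV_vs)
  interpret VP: vector_space_pair sv "(*) :: 'k \<Rightarrow> 'k \<Rightarrow> 'k"
    by (rule vector_space_pair.intro[OF FV_vs kvs])
  define Phi2 where "Phi2 t = (\<Sum>i\<in>UNIV. sc (t i) (R k i))" for t
  define VV where "VV = {t. Phi2 t \<in> L}"
  have VVsub: "FV.subspace VV"
  proof (rule FV.subspaceI)
    have "Phi2 0 = 0" unfolding Phi2_def by simp
    thus "0 \<in> VV" unfolding VV_def using SV.subspace_0[OF L_subspace] by simp
  next
    fix x y assume "x \<in> VV" "y \<in> VV"
    moreover have "Phi2 (x + y) = Phi2 x + Phi2 y"
      unfolding Phi2_def by (simp add: SV.scale_left_distrib sum.distrib)
    ultimately show "x + y \<in> VV" unfolding VV_def using SV.subspace_add[OF L_subspace] by simp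
  next
    fix c x assume "x \<in> VV"
    moreover have "Phi2 (sv c x) = sc c (Phi2 x)"
      unfolding Phi2_def by (simp add: sv_apply SV.scale_sum_right)
    ultimately show "sv c x \<in> VV" unfolding VV_def using SV.subspace_scale[OF L_subspace] by simp
  qed
  define dl :: "'i \<Rightarrow> 'i \<Rightarrow> 'k" where "dl i = (\<lambda>j. if j = i then 1 else 0)" for i
  have Phi2_dl: "Phi2 (dl i0) = R k i0"
  proof -
    have "Phi2 (dl i0) = (\<Sum>i\<in>UNIV. if i = i0 then R k i else 0)"
      unfolding Phi2_def dl_def by (intro sum.cong) auto
    thus ?thesis by simp
  qed
  show ?thesis
  proof (rule ccontr)
    assume nin: "R k i0 \<notin> L"
    hence dnin: "dl i0 \<notin> VV" unfolding VV_def using Phi2_dl by simp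
    obtain B where B: "B \<subseteq> VV" "FV.independent B" "VV \<subseteq> FV.span B"
      by (rule FV.maximal_independent_subset)
    have spB: "FV.span B \<subseteq> VV" using FV.span_minimal[OF B(1) VVsub] .
    hence "dl i0 \<notin> FV.span B" using dnin by blast
    hence ind: "FV.independent (insert (dl i0) B)" using FV.independent_insertI B(2) by blast
    obtain g where g: "Vector_Spaces.linear sv (*) g"
      "\<forall>x\<in>insert (dl i0) B. g x = (if x = dl i0 then 1 else 0)"
      using VP.linear_independent_extend[OF ind, of "\<lambda>x. if x = dl i0 then 1 else 0"] by blast
    have hom: "module_hom sv (*) g" using g(1) by (simp add: module_hom_iff_linear)
    have g0B: "\<And>x. x \<in> B \<Longrightarrow> g x = 0" using g(2) dnin B(1) by auto
    have gV: "g v = 0" if "v \<in> VV" for v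
      using module_hom.eq_0_on_span[OF hom g0B] B(3) that by blast
    have gadd: "g (x + y) = g x + g y" for x y using hom by (simp add: module_hom.add)
    have gsc: "g (sv c x) = c * g x" for c x using hom by (simp add: module_hom.scale)
    have gsum: "g (\<Sum>i\<in>A. sv (t i) (dl i)) = (\<Sum>i\<in>A. t i * g (dl i))" for A t
    proof (induction A rule: infinite_finite_induct)
      case (infinite A) thus ?case using module_hom.zero[OF hom] by simp
    next
      case empty thus ?case using module_hom.zero[OF hom] by (simp only: sum.empty)
    next
      case (insert a F)
      thus ?case by (simp only: sum.insert[OF insert(1,2)] gadd gsc)
    qed
    define tt where "tt i = g (dl i)" for i
    have gexp: "g w = (\<Sum>i\<in>UNIV. w i * tt i)" for w
    proof -
      have "w = (\<Sum>i\<in>UNIV. sv (w i) (dl i))"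
      proof (rule ext)
        fix j
        have "(\<Sum>i\<in>UNIV. sv (w i) (dl i)) j = (\<Sum>i\<in>UNIV. if i = j then w i else 0)"
          unfolding sum_fun_apply' sv_apply dl_def by (intro sum.cong) auto
        thus "w j = (\<Sum>i\<in>UNIV. sv (w i) (dl i)) j" by simp
      qed
      hence "g w = g (\<Sum>i\<in>UNIV. sv (w i) (dl i))" by simp
      thus ?thesis unfolding gsum tt_def .
    qed
    define x where "x = (\<Sum>i\<in>UNIV. scale (tt i) (b i))"
    have "br x (b m) = 0" for m
    proof (rule nondeg)
      fix l
      have wVV: "wv l m \<in> VV" unfolding VV_def Phi2_def using W[of l m] by simp
      have "killing scale br (br x (b m)) (b l) = (\<Sum>i\<in>UNIV. tt i * wv l m i)"
        unfolding x_def br_sum1 br_scale1 killing_sum1 wv_def ..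
      also have "\<dots> = g (wv l m)" unfolding gexp by (simp add: mult.commute)
      also have "\<dots> = 0" using gV[OF wVV] .
      finally show "killing scale br (br x (b m)) (b l) = 0" .
    qed
    hence "x = 0" by (rule central_zero)
    hence "tt i0 = 0" unfolding x_def by (rule sum_indep)
    moreover have "tt i0 = 1" unfolding tt_def using g(2) by simp
    ultimately show False by simp
  qed
qed

lemma R_in_L: "R k i \<in> L"
proof -
  have "\<forall>c1\<le>c. \<forall>i. R c1 i \<in> L" for c
  proof (induction c)
    case 0
    thus ?case using R0_in_Sr lie_gen.base[of _ Sr scale br] by auto
  next
    case (Suc c)
    have "R (Suc c) i \<in> L" for i
      by (rule rank_arg, rule partB_step) (use Suc.IH in auto)
    thus ?case using Suc.IH le_Suc_eq by auto
  qed
  thus ?thesis by blast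
qed

lemma main: "gr scale r \<inter> zinv_power_series = Sr \<and> L = gr scale r"
proof
  show "gr scale r \<inter> zinv_power_series = Sr" by (rule part1)
  show "L = gr scale r"
  proof
    show "L \<subseteq> gr scale r" using L_sub_gr gr_eq by auto
    show "gr scale r \<subseteq> L" unfolding gr_eq
      using L_span[of _ G] R_in_L by (auto simp: G_def)
  qed
qed

end

theorem lemma1p11:
  fixes scale :: "'k::field_char_0 \<Rightarrow> 'g::ab_group_add \<Rightarrow> 'g"
    and br :: "'g \<Rightarrow> 'g \<Rightarrow> 'g"
    and b :: "'i::finite \<Rightarrow> 'g"
    and r :: "int \<Rightarrow> nat \<Rightarrow> 'i \<Rightarrow> 'g"
  assumes ss: "semisimple scale br"
    and basis: "finite_dimensional_vector_space scale (range b)"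
    and inj: "inj b"
    and orthonormal: "\<And>i j. killing scale br (b i) (b j) = (if i = j then 1 else 0)"
    and rmat: "normalized_formal_gen_r_matrix scale br b r"
  shows "gr scale r \<inter> zinv_power_series =
           {(\<lambda>n. \<Sum>i\<in>UNIV. scale (\<alpha> (b i)) (r n 0 i)) | \<alpha>. Vector_Spaces.linear scale (*) \<alpha>}
     \<and> lie_gen scale br {(\<lambda>n. \<Sum>i\<in>UNIV. scale (\<alpha> (b i)) (r n 0 i)) | \<alpha>. Vector_Spaces.linear scale (*) \<alpha>}
         = gr scale r"
proof -
  interpret LSetup scale br b r unfolding LSetup_def using assms by blast
  show ?thesis using main unfolding Sr_def .
qed

end
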